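(* For $n\ge 0$, $$(\mathfrak C_0+\mathfrak C_0)^n=(2n)!\sum_{l=0}^{n}\frac{(-1)^{n-l}(2n-2l-3)!!\,(2l-1)}{2^{n-l}(n-l)!\,(2l)!}\mathfrak C_{2l}.$$
   Context: The numbers $\mathfrak C_{2n}$ (Cauchy numbers with level $2$) are defined by $\frac{t}{{\rm arcsinh}\,t}=\sum_{n=0}^\infty\mathfrak C_{2n}\frac{t^{2n}}{(2n)!}$ (equivalently $\mathfrak C_{2n}=\mathfrak C_{2n}^{(1)}$, where ${\rm Lif}_{2,1}({\rm arcsinh}\,t)=\sum_n\mathfrak C_n^{(1)}t^n/n!$ with ${\rm Lif}_{2,1}(z)=\sum_{m\ge0}\frac{z^{2m}}{(2m+1)!}$). Convolution notation: $(\mathfrak C_{2j_1}+\cdots+\mathfrak C_{2j_k})^n:=\sum_{i_1+\cdots+i_k=n,\ i_1,\dots,i_k\ge0}\frac{(2n)!}{(2i_1)!\cdots(2i_k)!}\mathfrak C_{2i_1+2j_1}\cdots\mathfrak C_{2i_k+2j_k}$. Double factorials: $(2i-1)!!=(2i-1)(2i-3)\cdots1$ for $i\ge1$, $(-1)!!=1$, and $(-(2i+1))!!=\frac{(-1)^i}{(2i-1)!!}$ for $i\ge1$. *)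

theory Defs
  imports "HOL-Analysis.Analysis"
begin

definition t_over_arsinh :: "real \<Rightarrow> real" where
  "t_over_arsinh t = (if t = 0 then 1 else t / arsinh t)"

text \<open>Taylor coefficients: t / arcsinh t = sum_n C_n t^n / n!, i.e. C_n is the n-th
  derivative at 0.  The paper's C_{2n} is cauchy2 (2*n).\<close>
definition cauchy2 :: "nat \<Rightarrow> real" where
  "cauchy2 m = (deriv ^^ m) t_over_arsinh 0"

text \<open>Double factorial for odd integers, including the negative convention
  (-1)!! = 1 and (-(2i+1))!! = (-1)^i / (2i-1)!!.\<close>
definition odd_dfact :: "int \<Rightarrow> real" where
  "odd_dfact m = (if m \<ge> -1 then (\<Prod>j<nat ((m + 1) div 2). real (2 * j + 1))
     else (let i = nat ((- m - 1) div 2) in (-1) ^ i / (\<Prod>j<i. real (2 * j + 1))))"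

definition cauchy2_conv2 :: "nat \<Rightarrow> real" where
  "cauchy2_conv2 n = (\<Sum>i\<le>n. fact (2 * n) / (fact (2 * i) * fact (2 * (n - i)))
      * cauchy2 (2 * i) * cauchy2 (2 * (n - i)))"

end

theory Submission imports Defs "HOL-Complex_Analysis.Complex_Analysis" begin

definition Sq :: "complex \<Rightarrow> complex" where "Sq z = csqrt (1 + z^2)"
definition Ar :: "complex \<Rightarrow> complex" where "Ar z = Ln (z + Sq z)"
definition FF :: "complex \<Rightarrow> complex" where "FF z = (if z = 0 then 1 else z / Ar z)"
abbreviation "BB \<equiv> ball (0::complex) (1/2)"

lemma dom1: assumes "z \<in> BB" shows "Re (1 + z^2) \<ge> 3/4"
proof -
  have "norm z < 1/2" using assms by simp
  hence "(cmod z)^2 < (1/2)^2" by (intro power_strict_mono) auto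
  hence "Re z ^2 + Im z ^2 < 1/4" using cmod_power2[of z] by (simp add: power2_eq_square)
  thus ?thesis by (simp add: power2_eq_square) (smt (verit) zero_le_power2 power2_eq_square)
qed

lemma dom2: assumes "z \<in> BB" shows "1 + z^2 \<notin> \<real>\<^sub>\<le>\<^sub>0"
  using dom1[OF assms] by (auto simp: complex_nonpos_Reals_iff)

lemma dom3: assumes "z \<in> BB" shows "Re (Sq z) > 1/2"
proof -
  have "Re (Sq z) = sqrt ((cmod (1+z^2) + Re (1+z^2)) / 2)" by (simp add: Sq_def)
  moreover have "sqrt ((cmod (1+z^2) + Re (1+z^2)) / 2) \<ge> sqrt (3/4)"
    using dom1[OF assms] complex_Re_le_cmod[of "1+z^2"] by (intro real_sqrt_le_mono) (simp add: divide_simps)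
  moreover have "sqrt (3/4) > (1/2::real)" by (rule real_less_rsqrt) (simp add: power2_eq_square)
  ultimately show ?thesis by linarith
qed

lemma dom4: assumes "z \<in> BB" shows "z + Sq z \<notin> \<real>\<^sub>\<le>\<^sub>0"
proof -
  have "norm z < 1/2" using assms by simp
  hence "\<bar>Re z\<bar> < 1/2" using abs_Re_le_cmod[of z] by linarith
  thus ?thesis using dom3[OF assms] by (auto simp: complex_nonpos_Reals_iff)
qed

lemma Sq_sq: "Sq z ^ 2 = 1 + z^2" by (simp add: Sq_def)

lemma Sq_nz: "z \<in> BB \<Longrightarrow> Sq z \<noteq> 0" using dom3[of z] by auto

lemma Sq_deriv: "z \<in> BB \<Longrightarrow> (Sq has_field_derivative z / Sq z) (at z)"
  unfolding Sq_def[abs_def]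
  apply (rule derivative_eq_intros refl | simp add: dom2)+
  done

lemma Ar_deriv: assumes "z \<in> BB" shows "(Ar has_field_derivative 1 / Sq z) (at z)"
proof -
  have "(Ar has_field_derivative (1 + z / Sq z) / (z + Sq z)) (at z)"
  proof -
    have "((\<lambda>x. x + Sq x) has_field_derivative 1 + z / Sq z) (at z)"
      by (intro derivative_intros Sq_deriv assms)
    from DERIV_chain[OF has_field_derivative_Ln[OF dom4[OF assms]] this]
    show ?thesis by (simp add: Ar_def[abs_def] o_def divide_inverse mult.commute)
  qed
  moreover have "(1 + z / Sq z) / (z + Sq z) = 1 / Sq z"
  proof -
    have "z + Sq z \<noteq> 0" using dom4[OF assms] by auto
    moreover have "1 + z / Sq z = (z + Sq z) / Sq z" using Sq_nz[OF assms] by (simp add: field_simps)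
    ultimately show ?thesis by simp
  qed
  ultimately show ?thesis by simp
qed

lemma Ar_holo: "Ar holomorphic_on BB"
  using Ar_deriv field_differentiable_def holomorphic_on_def
  by (metis field_differentiable_at_within)

lemma Sq_holo: "Sq holomorphic_on BB"
  using Sq_deriv field_differentiable_def holomorphic_on_def
  by (metis field_differentiable_at_within)

lemma Ar0: "Ar 0 = 0" by (simp add: Ar_def Sq_def)
lemma Sq0: "Sq 0 = 1" by (simp add: Sq_def)
lemma Ar_deriv0: "deriv Ar 0 = 1"
  using Ar_deriv[of 0] by (simp add: DERIV_imp_deriv Sq0)

lemma Ar_nz: assumes "z \<in> BB" "z \<noteq> 0" shows "Ar z \<noteq> 0"
proof
  assume "Ar z = 0"
  hence "z + Sq z = 1" using dom4[OF assms(1)] by (simp add: Ar_def)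
  hence "Sq z = 1 - z" by (metis add_diff_cancel_left')
  hence "(1 - z)^2 = 1 + z^2" using Sq_sq[of z] by simp
  hence "z = 0" by (simp add: power2_eq_square algebra_simps)
  thus False using assms by simp
qed


lemma FF_alt: "z \<in> BB \<Longrightarrow> FF z = 1 / (if z = 0 then deriv Ar 0 else (Ar z - Ar 0) / (z - 0))"
  by (auto simp: FF_def Ar_deriv0 Ar0)

lemma FF_holo: "FF holomorphic_on BB"
proof -
  have h: "(\<lambda>z. if z = 0 then deriv Ar 0 else (Ar z - Ar 0) / (z - 0)) holomorphic_on BB"
    by (rule pole_lemma[OF Ar_holo]) simp
  have "(\<lambda>z. 1 / (if z = 0 then deriv Ar 0 else (Ar z - Ar 0) / (z - 0))) holomorphic_on BB"
    by (rule holomorphic_on_divide[OF _ h]) (auto simp: Ar_deriv0 Ar0 Ar_nz)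
  thus ?thesis by (rule holomorphic_transform) (simp add: FF_alt)
qed

lemma FF_deriv_nz: assumes "z \<in> BB" "z \<noteq> 0"
  shows "deriv FF z = (Ar z - z * (1 / Sq z)) / (Ar z)^2"
proof -
  have "((\<lambda>w. w / Ar w) has_field_derivative (1 * Ar z - z * (1 / Sq z)) / (Ar z * Ar z)) (at z)"
    by (rule DERIV_divide Ar_deriv assms DERIV_ident Ar_nz)+
  hence "(FF has_field_derivative (1 * Ar z - z * (1 / Sq z)) / (Ar z * Ar z)) (at z)"
    by (rule has_field_derivative_transform_within_open[where S="BB - {0}"])
       (use assms in \<open>auto simp: FF_def\<close>)
  thus ?thesis by (simp add: DERIV_imp_deriv power2_eq_square)
qed

lemma FF_ode: assumes "z \<in> BB" shows "FF z * FF z = Sq z * (FF z - z * deriv FF z)"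
proof (cases "z = 0")
  case True thus ?thesis by (simp add: FF_def Sq0)
next
  case False
  have a: "Ar z \<noteq> 0" using Ar_nz assms False by auto
  have s: "Sq z \<noteq> 0" using Sq_nz assms by auto
  show ?thesis using a s False
    by (simp add: FF_deriv_nz[OF assms False] FF_def field_simps power2_eq_square)
qed

lemma Sq_even: "Sq (-z) = Sq z" by (simp add: Sq_def)

lemma Ar_odd: assumes "z \<in> BB" shows "Ar (-z) = - Ar z"
proof -
  have nz: "z + Sq z \<noteq> 0" using dom4[OF assms] by auto
  have "(Sq z - z) * (Sq z + z) = 1" using Sq_sq[of z] by (simp add: algebra_simps power2_eq_square)
  hence "-z + Sq z = inverse (z + Sq z)" using nz by (simp add: field_simps)
  thus ?thesis using Ln_inverse[OF dom4[OF assms]] by (simp add: Ar_def Sq_even)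
qed

lemma FF_even: "z \<in> BB \<Longrightarrow> FF (-z) = FF z"
  by (auto simp: FF_def Ar_odd)

lemma even_fun_odd_deriv:
  assumes h: "h holomorphic_on BB" and ev: "\<And>z. z \<in> BB \<Longrightarrow> h (-z) = h z" and n: "odd n"
  shows "(deriv ^^ n) h 0 = 0"
proof -
  have hol2: "(\<lambda>w. h (-1 * w)) holomorphic_on BB"
  proof -
    have "uminus ` BB \<subseteq> BB" by auto
    moreover have "(uminus::complex\<Rightarrow>complex) holomorphic_on BB" by (intro holomorphic_intros)
    ultimately show ?thesis
      using holomorphic_on_compose_gen[OF _ h, of "\<lambda>w. -1 * w" BB] by (simp add: o_def)
  qed
  have "(deriv ^^ n) (\<lambda>w. h (-1 * w)) 0 = (-1)^n * (deriv ^^ n) h (-1 * 0)"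
    by (rule higher_deriv_compose_linear[where S=BB, OF h]) auto
  moreover have "(deriv ^^ n) (\<lambda>w. h (-1 * w)) 0 = (deriv ^^ n) h 0"
    by (rule higher_deriv_transform_within_open[OF hol2 h]) (auto simp: ev)
  ultimately show ?thesis using n by simp
qed


lemma FF_real: assumes "-1/2 < t" "t < 1/2"
  shows "FF (of_real t) = of_real (t_over_arsinh t)"
proof (cases "t = 0")
  case True thus ?thesis by (simp add: FF_def t_over_arsinh_def)
next
  case False
  have "Sq (of_real t) = of_real (sqrt (t^2 + 1))"
  proof -
    have "1 + (complex_of_real t)^2 = complex_of_real (t^2 + 1)" by simp
    thus ?thesis unfolding Sq_def by (simp add: csqrt_of_real del: of_real_add)
  qed
  hence "Ar (of_real t) = of_real (arsinh t)"
    using arsinh_real_aux[of t] by (simp add: Ar_def arsinh_real_def Ln_of_real flip: of_real_add)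
  thus ?thesis using False by (simp add: FF_def t_over_arsinh_def)
qed

lemma real_of_vec_deriv:
  fixes g :: "real \<Rightarrow> real"
  assumes "((\<lambda>x. complex_of_real (g x)) has_vector_derivative D) (at t)"
  shows "(g has_real_derivative Re D) (at t)" "Im D = 0"
proof -
  have d: "((\<lambda>x. complex_of_real (g x)) has_derivative (\<lambda>h. h *\<^sub>R D)) (at t)"
    using assms by (simp add: has_vector_derivative_def)
  have "((\<lambda>x. Re (complex_of_real (g x))) has_derivative (\<lambda>h. Re (h *\<^sub>R D))) (at t)"
    by (rule has_derivative_Re[OF d])
  moreover have "(\<lambda>h. Re (h *\<^sub>R D)) = (\<lambda>h. Re D * h)" by auto
  ultimately show "(g has_real_derivative Re D) (at t)" by (simp add: has_field_derivative_def)
  have "((\<lambda>x. Im (complex_of_real (g x))) has_derivative (\<lambda>h. Im (h *\<^sub>R D))) (at t)"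
    by (rule has_derivative_Im[OF d])
  moreover have "(\<lambda>h. Im (h *\<^sub>R D)) = (\<lambda>h. Im D * h)" by auto
  ultimately have "((\<lambda>x. 0::real) has_real_derivative Im D) (at t)" by (simp add: has_field_derivative_def)
  thus "Im D = 0" using DERIV_const DERIV_unique by blast
qed

lemma FF_transfer:
  "\<forall>t. -1/2 < t \<and> t < 1/2 \<longrightarrow> (deriv ^^ m) FF (of_real t) = of_real ((deriv ^^ m) t_over_arsinh t)"
proof (induction m)
  case 0 thus ?case by (simp add: FF_real)
next
  case (Suc m)
  show ?case
  proof (intro allI impI)
    fix t :: real assume t: "-1/2 < t \<and> t < 1/2"
    have inB: "complex_of_real t \<in> BB" using t by (auto simp: abs_if)
    define D where "D = deriv ((deriv ^^ m) FF) (of_real t)"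
    have "((deriv ^^ m) FF has_field_derivative D) (at (of_real t))"
      unfolding D_def by (rule holomorphic_derivI[OF holomorphic_higher_deriv[OF FF_holo open_ball] open_ball inB])
    hence "((\<lambda>x. (deriv ^^ m) FF (of_real x)) has_vector_derivative D) (at t)"
      by (rule has_vector_derivative_real_field)
    hence vd: "((\<lambda>x. complex_of_real ((deriv ^^ m) t_over_arsinh x)) has_vector_derivative D) (at t)"
      by (rule has_vector_derivative_transform_within_open[where S="{-1/2<..<1/2}"]) (use t Suc in auto)
    have "deriv ((deriv ^^ m) t_over_arsinh) t = Re D"
      using real_of_vec_deriv(1)[OF vd] by (rule DERIV_imp_deriv)
    moreover have "Im D = 0" using real_of_vec_deriv(2)[OF vd] .
    ultimately show "(deriv ^^ Suc m) FF (of_real t) = of_real ((deriv ^^ Suc m) t_over_arsinh t)"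
      by (simp add: D_def complex_eq_iff)
  qed
qed

lemma cauchy2_FF: "(deriv ^^ m) FF 0 = of_real (cauchy2 m)"
  using FF_transfer[of m] by (auto simp: cauchy2_def dest: spec[of _ 0])


lemma Lz: assumes h: "h holomorphic_on BB"
  shows "(deriv ^^ k) (\<lambda>z. z * h z) 0 = of_nat k * (deriv ^^ (k - 1)) h 0"
proof -
  have "(deriv ^^ k) (\<lambda>z. z * h z) 0 =
     (\<Sum>i = 0..k. of_nat (k choose i) * (deriv ^^ i) (\<lambda>w. w) 0 * (deriv ^^ (k-i)) h 0)"
    by (rule higher_deriv_mult[OF _ h]) (auto intro: holomorphic_intros)
  also have "\<dots> = (\<Sum>i = 0..k. if i = 1 then of_nat k * (deriv ^^ (k-1)) h 0 else 0)"
    by (intro sum.cong refl) auto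
  also have "\<dots> = of_nat k * (deriv ^^ (k - 1)) h 0"
    by (cases k) (auto simp: sum.delta)
  finally show ?thesis .
qed

lemma HH_deriv: "(deriv ^^ k) (\<lambda>z. FF z - z * deriv FF z) 0 = (1 - of_nat k) * (deriv ^^ k) FF 0"
proof -
  have hd: "deriv FF holomorphic_on BB" by (intro holomorphic_intros FF_holo) auto
  have "(deriv ^^ k) (\<lambda>z. FF z - z * deriv FF z) 0 = (deriv ^^ k) FF 0 - (deriv ^^ k) (\<lambda>z. z * deriv FF z) 0"
    by (rule higher_deriv_diff[OF FF_holo _ open_ball]) (auto intro!: holomorphic_intros hd)
  also have "(deriv ^^ k) (\<lambda>z. z * deriv FF z) 0 = of_nat k * (deriv ^^ k) FF 0"
  proof (cases k)
    case (Suc j)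
    have e: "(deriv ^^ (k-1)) (deriv FF) = (deriv ^^ k) FF"
      using Suc by (simp add: funpow_Suc_right del: funpow.simps)
    show ?thesis using Lz[OF hd, of k] e by simp
  qed simp
  finally show ?thesis by (simp add: algebra_simps)
qed

lemma Sq_ode: "z \<in> BB \<Longrightarrow> deriv Sq z + z * (z * deriv Sq z) = z * Sq z"
proof -
  assume z: "z \<in> BB"
  have d: "deriv Sq z = z / Sq z" using Sq_deriv[OF z] by (rule DERIV_imp_deriv)
  have s: "Sq z * Sq z = 1 + z*z" using Sq_sq[of z] by (simp add: power2_eq_square)
  have "deriv Sq z + z * (z * deriv Sq z) = z / Sq z * (1 + z*z)" by (simp add: d algebra_simps)
  also have "\<dots> = z / Sq z * (Sq z * Sq z)" by (simp add: s)
  also have "\<dots> = z * Sq z" using Sq_nz[OF z] by simp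
  finally show ?thesis .
qed

lemma Sq_rec: "(deriv ^^ (2 * Suc m)) Sq 0 = of_nat (2*m+1) * (1 - 2 * of_nat m) * (deriv ^^ (2*m)) Sq 0"
proof -
  have hd: "deriv Sq holomorphic_on BB" by (intro holomorphic_intros Sq_holo) auto
  have hd2: "(\<lambda>z. z * deriv Sq z) holomorphic_on BB" by (intro holomorphic_intros hd)
  let ?k = "2*m+1"
  have "(deriv ^^ ?k) (\<lambda>z. deriv Sq z + z * (z * deriv Sq z)) 0 = (deriv ^^ ?k) (\<lambda>z. z * Sq z) 0"
    by (rule higher_deriv_transform_within_open[OF _ _ open_ball])
       (auto intro!: holomorphic_intros hd Sq_holo simp: Sq_ode)
  moreover have "(deriv ^^ ?k) (\<lambda>z. deriv Sq z + z * (z * deriv Sq z)) 0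
      = (deriv ^^ ?k) (deriv Sq) 0 + (deriv ^^ ?k) (\<lambda>z. z * (z * deriv Sq z)) 0"
    by (rule higher_deriv_add[OF hd _ open_ball]) (auto intro!: holomorphic_intros hd)
  moreover have "(deriv ^^ ?k) (deriv Sq) 0 = (deriv ^^ (2 * Suc m)) Sq 0"
    by (simp add: funpow_Suc_right del: funpow.simps)
  moreover have "(deriv ^^ ?k) (\<lambda>z. z * (z * deriv Sq z)) 0 = of_nat ?k * (of_nat (2*m) * (deriv ^^ (2*m)) Sq 0)"
  proof -
    have "(deriv ^^ ?k) (\<lambda>z. z * (z * deriv Sq z)) 0 = of_nat ?k * (deriv ^^ (2*m)) (\<lambda>z. z * deriv Sq z) 0"
      using Lz[OF hd2, of ?k] by simp
    also have "(deriv ^^ (2*m)) (\<lambda>z. z * deriv Sq z) 0 = of_nat (2*m) * (deriv ^^ (2*m)) Sq 0"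
    proof (cases m)
      case (Suc j)
      have "2 * m - 1 = Suc (2 * j)" using Suc by simp
      hence "(deriv ^^ (2*m-1)) (deriv Sq) = (deriv ^^ (2*m)) Sq"
        using Suc by (simp add: funpow_Suc_right del: funpow.simps)
      thus ?thesis using Lz[OF hd, of "2*m"] by simp
    qed simp
    finally show ?thesis .
  qed
  moreover have "(deriv ^^ ?k) (\<lambda>z. z * Sq z) 0 = of_nat ?k * (deriv ^^ (2*m)) Sq 0"
    using Lz[OF Sq_holo, of ?k] by simp
  ultimately show ?thesis by (simp add: algebra_simps)
qed

lemma main_complex:
  "(\<Sum>i = 0..2*n. of_nat (2*n choose i) * (deriv ^^ i) FF 0 * (deriv ^^ (2*n-i)) FF 0) =
   (\<Sum>i = 0..2*n. of_nat (2*n choose i) * (deriv ^^ i) Sq 0 * ((1 - of_nat (2*n-i)) * (deriv ^^ (2*n-i)) FF 0))"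
proof -
  have hd: "deriv FF holomorphic_on BB" by (intro holomorphic_intros FF_holo) auto
  have hh: "(\<lambda>z. FF z - z * deriv FF z) holomorphic_on BB"
    by (intro holomorphic_intros hd FF_holo)
  have "(deriv ^^ (2*n)) (\<lambda>z. FF z * FF z) 0 = (deriv ^^ (2*n)) (\<lambda>z. Sq z * (FF z - z * deriv FF z)) 0"
    by (rule higher_deriv_transform_within_open[OF _ _ open_ball])
       (auto intro!: holomorphic_intros hh Sq_holo FF_holo simp: FF_ode)
  moreover have "(deriv ^^ (2*n)) (\<lambda>z. FF z * FF z) 0 =
     (\<Sum>i = 0..2*n. of_nat (2*n choose i) * (deriv ^^ i) FF 0 * (deriv ^^ (2*n-i)) FF 0)"
    by (rule higher_deriv_mult[OF FF_holo FF_holo open_ball]) simp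
  moreover have "(deriv ^^ (2*n)) (\<lambda>z. Sq z * (FF z - z * deriv FF z)) 0 =
     (\<Sum>i = 0..2*n. of_nat (2*n choose i) * (deriv ^^ i) Sq 0 * (deriv ^^ (2*n-i)) (\<lambda>z. FF z - z * deriv FF z) 0)"
    by (rule higher_deriv_mult[OF Sq_holo hh open_ball]) simp
  ultimately show ?thesis by (simp add: HH_deriv)
qed


primrec sig :: "nat \<Rightarrow> real" where
  "sig 0 = 1"
| "sig (Suc m) = (2 * real m + 1) * (1 - 2 * real m) * sig m"

definition sv :: "nat \<Rightarrow> real" where "sv i = (if even i then sig (i div 2) else 0)"

lemma Sq_even_deriv: "(deriv ^^ (2*m)) Sq 0 = of_real (sig m)"
proof (induction m)
  case 0 thus ?case by (simp add: Sq0)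
next
  case (Suc m) thus ?case by (simp only: Sq_rec) simp
qed

lemma Sq_deriv_sv: "(deriv ^^ i) Sq 0 = of_real (sv i)"
proof (cases "even i")
  case True then obtain m where "i = 2*m" by blast
  thus ?thesis by (simp add: Sq_even_deriv sv_def)
next
  case False thus ?thesis
    using even_fun_odd_deriv[OF Sq_holo _ False] by (simp add: Sq_even sv_def)
qed

lemma cauchy2_odd: "odd i \<Longrightarrow> cauchy2 i = 0"
  using even_fun_odd_deriv[OF FF_holo FF_even, of i] cauchy2_FF[of i] by simp

lemma main_real:
  "(\<Sum>i = 0..2*n. real (2*n choose i) * cauchy2 i * cauchy2 (2*n-i)) =
   (\<Sum>i = 0..2*n. real (2*n choose i) * sv i * ((1 - real (2*n-i)) * cauchy2 (2*n-i)))"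
proof -
  have "complex_of_real (\<Sum>i = 0..2*n. real (2*n choose i) * cauchy2 i * cauchy2 (2*n-i)) =
        complex_of_real (\<Sum>i = 0..2*n. real (2*n choose i) * sv i * ((1 - real (2*n-i)) * cauchy2 (2*n-i)))"
    using main_complex[of n] by (simp add: cauchy2_FF Sq_deriv_sv)
  thus ?thesis by (simp only: of_real_eq_iff)
qed

lemma sum_even:
  fixes g :: "nat \<Rightarrow> real"
  assumes "\<And>i. odd i \<Longrightarrow> g i = 0"
  shows "(\<Sum>i = 0..2*n. g i) = (\<Sum>k\<le>n. g (2*k))"
proof (induction n)
  case 0 thus ?case by simp
next
  case (Suc n)
  have "(\<Sum>i = 0..2*Suc n. g i) = (\<Sum>i = 0..2*n. g i) + g (2*n+1) + g (2*n+2)"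
    by (simp add: add.assoc)
  thus ?case using Suc assms[of "2*n+1"] by simp
qed

lemma dfact_step: "odd_dfact (2 * int m - 1) = (2 * real m - 1) * odd_dfact (2 * int m - 3)"
proof (cases m)
  case 0 thus ?thesis by (simp add: odd_dfact_def)
next
  case (Suc j)
  have a: "nat ((2 * int m - 1 + 1) div 2) = Suc j" using Suc by simp
  have b: "nat ((2 * int m - 3 + 1) div 2) = j" using Suc by simp
  have "odd_dfact (2 * int m - 1) = (\<Prod>k<Suc j. real (2 * k + 1))"
    unfolding odd_dfact_def using a Suc by simp
  moreover have "odd_dfact (2 * int m - 3) = (\<Prod>k<j. real (2 * k + 1))"
    unfolding odd_dfact_def using b Suc by simp
  ultimately show ?thesis using Suc by (simp add: algebra_simps)
qed

lemma sig_closed: "sig m = - fact (2*m) * (-1)^m * odd_dfact (2 * int m - 3) / (2^m * fact m)"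
proof (induction m)
  case 0 thus ?case by (simp add: odd_dfact_def)
next
  case (Suc m)
  have e: "2 * int (Suc m) - 3 = 2 * int m - 1" by simp
  have f1: "fact (2 * Suc m) = (2 * real m + 2) * (2 * real m + 1) * (fact (2*m) :: real)"
    by (simp add: algebra_simps)
  have f2: "fact (Suc m) = (real m + 1) * (fact m :: real)" by (simp add: algebra_simps)
  have p: "(2::real)^Suc m = 2 * 2^m" "(-1::real)^Suc m = - ((-1)^m)" by simp_all
  show ?case
    by (simp only: sig.simps Suc.IH e dfact_step f1 f2 p) (simp add: field_simps add_nonneg_eq_0_iff)
qed


lemma choose_real: "k \<le> m \<Longrightarrow> real (m choose k) = fact m / (fact k * fact (m - k))"
  by (simp add: binomial_fact)

theorem theorem2:
  fixes n :: nat
  shows "cauchy2_conv2 n = fact (2 * n) * (\<Sum>l\<le>n.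
     (-1) ^ (n - l) * odd_dfact (2 * int n - 2 * int l - 3) * (2 * real l - 1)
       / (2 ^ (n - l) * fact (n - l) * fact (2 * l)) * cauchy2 (2 * l))"
proof -
  have L1: "(\<Sum>i = 0..2*n. real (2*n choose i) * cauchy2 i * cauchy2 (2*n-i)) =
      (\<Sum>k\<le>n. real (2*n choose (2*k)) * cauchy2 (2*k) * cauchy2 (2*n-2*k))"
    by (rule sum_even) (simp add: cauchy2_odd)
  have L2: "cauchy2_conv2 n = (\<Sum>k\<le>n. real (2*n choose (2*k)) * cauchy2 (2*k) * cauchy2 (2*n-2*k))"
    unfolding cauchy2_conv2_def
    by (intro sum.cong refl) (simp add: choose_real right_diff_distrib')
  have R1: "(\<Sum>i = 0..2*n. real (2*n choose i) * sv i * ((1 - real (2*n-i)) * cauchy2 (2*n-i))) =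
      (\<Sum>k\<le>n. real (2*n choose (2*k)) * sig k * ((1 - real (2*n-2*k)) * cauchy2 (2*n-2*k)))"
    by (rule trans[OF sum_even]) (auto simp: sv_def)
  also have "\<dots> = (\<Sum>l = 0..n. real (2*n choose (2*(n-l))) * sig (n-l) * ((1 - real (2*n-2*(n-l))) * cauchy2 (2*n-2*(n-l))))"
    by (subst atMost_atLeast0, subst sum.atLeastAtMost_rev) simp
  also have "\<dots> = (\<Sum>l\<le>n. fact (2 * n) * ((-1) ^ (n - l) * odd_dfact (2 * int n - 2 * int l - 3) * (2 * real l - 1)
       / (2 ^ (n - l) * fact (n - l) * fact (2 * l)) * cauchy2 (2 * l)))"
    unfolding atMost_atLeast0[symmetric]
  proof (intro sum.cong refl)
    fix l assume "l \<in> {..n}"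
    hence l: "l \<le> n" by simp
    have e1: "2*n - 2*(n-l) = 2*l" using l by simp
    have e2: "2 * int n - 2 * int l - 3 = 2 * int (n-l) - 3" using l by simp
    have e3: "real (2*n choose (2*(n-l))) = fact (2*n) / (fact (2*(n-l)) * fact (2*l))"
      using l by (simp add: choose_real e1)
    show "real (2*n choose (2*(n-l))) * sig (n-l) * ((1 - real (2*n-2*(n-l))) * cauchy2 (2*n-2*(n-l))) =
      fact (2 * n) * ((-1) ^ (n - l) * odd_dfact (2 * int n - 2 * int l - 3) * (2 * real l - 1)
       / (2 ^ (n - l) * fact (n - l) * fact (2 * l)) * cauchy2 (2 * l))"
      unfolding e1 e2 e3 sig_closed by (simp add: field_simps)
  qed
  finally have R: "(\<Sum>i = 0..2*n. real (2*n choose i) * sv i * ((1 - real (2*n-i)) * cauchy2 (2*n-i))) =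
      fact (2 * n) * (\<Sum>l\<le>n. (-1) ^ (n - l) * odd_dfact (2 * int n - 2 * int l - 3) * (2 * real l - 1)
       / (2 ^ (n - l) * fact (n - l) * fact (2 * l)) * cauchy2 (2 * l))"
    by (simp add: sum_distrib_left)
  show ?thesis using L1 L2 R main_real[of n] by simp
qed

end
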